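(* Let $G$ be a locally compact abelian group with dual group $\Gamma$, and let $(\mu,\nu)$ be a spectral pair of positive Borel measures on $(G,\Gamma)$. If there exists a sequence of $\mu$-measurable sets $A_n\subset G$ with $\mu(A_n)\ne0$ for all $n$ and $\mu(A_n)\to0$, then $\nu(\Gamma)=+\infty$.
   Context: $G$ is written additively; $\Gamma=\hat G$ is the group of continuous homomorphisms $G\to\mathbb{T}$ (unit circle in $\mathbb{C}$). Write $\langle x,\xi\rangle$ for the pairing, $e_\xi(x)=\langle x,\xi\rangle$. $(\mu,\nu)$ is a spectral pair if, with $(Ff)(\xi)=\int_G f(x)\overline{e_\xi(x)}\,d\mu(x)$ for $f\in\mathcal{L}^1\cap\mathcal{L}^2(\mu)$, the set $\{Ff\}$ is dense in $\mathcal{L}^2(\nu)$ and $\int_\Gamma|Ff|^2d\nu=\int_G|f|^2d\mu$ for all such $f$. *)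

theory Defs
  imports "HOL-Analysis.Analysis" "HOL-Probability.Probability"
begin

definition LCA_group :: "'g::{topological_ab_group_add, t2_space} itself \<Rightarrow> bool" where
  "LCA_group _ \<longleftrightarrow> locally_compact_space (euclidean :: 'g topology)"

definition dual_group :: "('g::topological_ab_group_add \<Rightarrow> complex) set" where
  "dual_group = {\<xi>. continuous_on UNIV \<xi> \<and> (\<forall>x. norm (\<xi> x) = 1) \<and>
                     (\<forall>x y. \<xi> (x + y) = \<xi> x * \<xi> y)}"

definition dual_topology :: "('g::topological_ab_group_add \<Rightarrow> complex) topology" where
  "dual_topology = topology_generated_by
     {{\<xi> \<in> dual_group. \<xi> ` K \<subseteq> U} | K U. compact K \<and> open U}"

definition borel_of :: "'a topology \<Rightarrow> 'a measure" where
  "borel_of X = sigma (topspace X) {U. openin X U}"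

definition fourier :: "'g measure \<Rightarrow> ('g \<Rightarrow> complex) \<Rightarrow> ('g \<Rightarrow> complex) \<Rightarrow> complex" where
  "fourier \<mu> f \<xi> = (\<integral>x. f x * cnj (\<xi> x) \<partial>\<mu>)"

definition L2 :: "'a measure \<Rightarrow> ('a \<Rightarrow> complex) \<Rightarrow> bool" where
  "L2 M f \<longleftrightarrow> f \<in> borel_measurable M \<and> (\<integral>\<^sup>+x. ennreal ((norm (f x))\<^sup>2) \<partial>M) < \<infinity>"

definition L1L2 :: "'a measure \<Rightarrow> ('a \<Rightarrow> complex) \<Rightarrow> bool" where
  "L1L2 M f \<longleftrightarrow> integrable M f \<and> L2 M f"

definition spectral_pair ::
  "'g::{topological_ab_group_add, t2_space} measure \<Rightarrow> ('g \<Rightarrow> complex) measure \<Rightarrow> bool" where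
  "spectral_pair \<mu> \<nu> \<longleftrightarrow>
     sets \<mu> = sets borel \<and>
     sets \<nu> = sets (borel_of dual_topology) \<and>
     (\<forall>f. L1L2 \<mu> f \<longrightarrow>
        L2 \<nu> (fourier \<mu> f) \<and>
        (\<integral>\<^sup>+\<xi>. ennreal ((norm (fourier \<mu> f \<xi>))\<^sup>2) \<partial>\<nu>) = (\<integral>\<^sup>+x. ennreal ((norm (f x))\<^sup>2) \<partial>\<mu>)) \<and>
     (\<forall>g e. L2 \<nu> g \<and> e > 0 \<longrightarrow>
        (\<exists>f. L1L2 \<mu> f \<and> (\<integral>\<^sup>+\<xi>. ennreal ((norm (fourier \<mu> f \<xi> - g \<xi>))\<^sup>2) \<partial>\<nu>) < ennreal e))"

end

theory Submission
  imports Defs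
begin

lemma key_ineq:
  fixes \<mu> :: "'g::{topological_ab_group_add, t2_space} measure"
    and \<nu> :: "('g \<Rightarrow> complex) measure"
  assumes sp: "spectral_pair \<mu> \<nu>"
    and B: "B \<in> sets \<mu>" and fin: "emeasure \<mu> B \<noteq> \<infinity>"
  shows "ennreal (measure \<mu> B) \<le> ennreal ((measure \<mu> B)\<^sup>2) * emeasure \<nu> (space \<nu>)"
proof -
  define a where "a = measure \<mu> B"
  define f :: "'g \<Rightarrow> complex" where "f = (\<lambda>x. indicator B x)"
  have emB: "emeasure \<mu> B = ennreal a" using fin by (simp add: a_def emeasure_eq_ennreal_measure)
  have fm: "f \<in> borel_measurable \<mu>" unfolding f_def using B by simp
  have int0: "integrable \<mu> (\<lambda>x. complex_of_real (indicator B x))"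
    by (rule integrable_of_real) (use B fin in \<open>simp add: less_top\<close>)
  have "f = (\<lambda>x. complex_of_real (indicator B x))" by (auto simp: f_def indicator_def)
  with int0 have int: "integrable \<mu> f" by simp
  have nf: "(\<integral>\<^sup>+x. ennreal ((norm (f x))\<^sup>2) \<partial>\<mu>) = emeasure \<mu> B"
  proof -
    have "(\<integral>\<^sup>+x. ennreal ((norm (f x))\<^sup>2) \<partial>\<mu>) = (\<integral>\<^sup>+x. indicator B x \<partial>\<mu>)"
      by (rule nn_integral_cong) (auto simp: f_def indicator_def)
    also have "\<dots> = emeasure \<mu> B" using B by simp
    finally show ?thesis .
  qed
  have L: "L1L2 \<mu> f" unfolding L1L2_def L2_def using int fm nf fin
    by (simp add: less_top)
  have sps: "sets \<nu> = sets (borel_of dual_topology)" using sp by (simp add: spectral_pair_def)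
  have spc: "space \<nu> \<subseteq> dual_group"
  proof -
    have "space \<nu> = space (borel_of (dual_topology :: ('g \<Rightarrow> complex) topology))"
      using sps by (rule sets_eq_imp_space_eq)
    also have "\<dots> = topspace (dual_topology :: ('g \<Rightarrow> complex) topology)"
      by (simp add: borel_of_def space_measure_of_conv)
    also have "\<dots> \<subseteq> dual_group" by (auto simp: dual_topology_def)
    finally show ?thesis .
  qed
  have bound: "norm (fourier \<mu> f \<xi>) \<le> a" if "\<xi> \<in> space \<nu>" for \<xi>
  proof -
    have n1: "norm (\<xi> x) = 1" for x using spc that by (auto simp: dual_group_def)
    have "norm (fourier \<mu> f \<xi>) \<le> (\<integral>x. norm (f x * cnj (\<xi> x)) \<partial>\<mu>)"
      unfolding fourier_def by (rule integral_norm_bound)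
    also have "(\<integral>x. norm (f x * cnj (\<xi> x)) \<partial>\<mu>) = (\<integral>x. indicator B x \<partial>\<mu>)"
      by (rule Bochner_Integration.integral_cong) (auto simp: f_def indicator_def norm_mult n1)
    also have "\<dots> = a" using B fin by (simp add: a_def)
    finally show ?thesis .
  qed
  have "ennreal a = (\<integral>\<^sup>+\<xi>. ennreal ((norm (fourier \<mu> f \<xi>))\<^sup>2) \<partial>\<nu>)"
    using sp L nf emB by (simp add: spectral_pair_def)
  also have "\<dots> \<le> (\<integral>\<^sup>+\<xi>. ennreal (a\<^sup>2) \<partial>\<nu>)"
    by (rule nn_integral_mono) (auto intro!: power_mono bound)
  also have "\<dots> = ennreal (a\<^sup>2) * emeasure \<nu> (space \<nu>)" by simp
  finally show ?thesis by (simp add: a_def)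
qed

theorem corollaryA12:
  fixes \<mu> :: "'g::{topological_ab_group_add, t2_space} measure"
    and \<nu> :: "('g \<Rightarrow> complex) measure"
    and A :: "nat \<Rightarrow> 'g set"
  assumes "LCA_group TYPE('g)"
    and "spectral_pair \<mu> \<nu>"
    and "\<And>n. A n \<in> sets \<mu>"
    and "\<And>n. emeasure \<mu> (A n) \<noteq> 0"
    and "(\<lambda>n. emeasure \<mu> (A n)) \<longlonglongrightarrow> 0"
  shows "emeasure \<nu> (space \<nu>) = \<infinity>"
proof (rule ccontr)
  assume nf: "emeasure \<nu> (space \<nu>) \<noteq> \<infinity>"
  define c where "c = measure \<nu> (space \<nu>)"
  have c0: "c \<ge> 0" by (simp add: c_def)
  have ec: "emeasure \<nu> (space \<nu>) = ennreal c"
    using nf by (simp add: c_def emeasure_eq_ennreal_measure)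
  have "ennreal (1 / (c + 1)) > 0" using c0 by simp
  then have "eventually (\<lambda>n. emeasure \<mu> (A n) < ennreal (1 / (c + 1))) sequentially"
    by (rule order_tendstoD(2)[OF assms(5)])
  then obtain n where n: "emeasure \<mu> (A n) < ennreal (1 / (c + 1))"
    by (meson eventually_sequentially order_refl)
  have fin: "emeasure \<mu> (A n) \<noteq> \<infinity>" using n by auto
  define a where "a = measure \<mu> (A n)"
  have ea: "emeasure \<mu> (A n) = ennreal a"
    using fin by (simp add: a_def emeasure_eq_ennreal_measure)
  have a0: "a > 0" using assms(4)[of n] ea
    by (metis a_def ennreal_0 measure_nonneg order_less_le)
  have a1: "a < 1 / (c + 1)" using n ea c0 a0
    by (metis ennreal_less_iff order_less_imp_le)
  have "ennreal a \<le> ennreal (a\<^sup>2) * ennreal c"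
    using key_ineq[OF assms(2) assms(3) fin] ec by (simp add: a_def)
  then have "a \<le> a\<^sup>2 * c" using a0 c0
    by (simp add: ennreal_mult'[symmetric] ennreal_le_iff zero_le_mult_iff)
  then have "1 \<le> a * c" using a0 by (simp add: power2_eq_square)
  moreover have "a * (c + 1) < 1" using a1 c0 by (simp add: field_simps)
  ultimately show False using a0 by (simp add: algebra_simps)
qed

end
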